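(* In the setting described in the context, for every $j\in[\varepsilon^{-1}-\varepsilon^{-1/2}]$ it holds that $$\mathbb{E}\left[v(S_{j-1}\setminus S_j)\,\middle|\,\mathcal{F}_{j-1}\right]\ \ge\ v(x^j)\cdot\left(\varepsilon-\varepsilon^{3/2}\right)\cdot\frac{1}{1-(j-1)\varepsilon}.$$
   Context: A CMK instance is $\mathcal{I}=(I,w,v,m,k)$ with $I$ a finite item set, $w:I\to[0,1]$, $v:I\to\mathbb{R}_{\ge0}$, $m,k\in\mathbb{N}_{>0}$. A configuration is $C\subseteq I$ with $|C|\le k$ and $\sum_{i\in C}w(i)\le1$; $\mathcal{C}$ is the set of configurations and $\mathcal{C}(i)=\{C\in\mathcal{C}:i\in C\}$. A solution is a tuple of $m$ configurations, with value $v$ of their union; $\mathrm{OPT}(\mathcal{I})$ is the maximum value. A fractional solution is $x\in\mathbb{R}_{\ge0}^{\mathcal{C}}$, with $\mathrm{cover}_i(x)=\sum_{C\in\mathcal{C}(i)}x_C$, $\|x\|=\sum_Cx_C$; it is feasible if $\mathrm{cover}(x)\in[0,1]^I$; for $y\in\mathbb{R}^I$, $v(y)=\sum_iy_iv(i)$, and $v(x)=v(\mathrm{cover}(x))$. For $S\subseteq I$ and $\ell\in\mathbb{N}$, $\mathrm{LP}(S,\ell)$ is: maximize $v(x)$ over feasible fractional solutions $x$ with $x_C=0$ whenever $C\not\subseteq S$, and $\|x\|=\ell$. For $\|x\|\ne0$, a random configuration $R$ is distributed by $x$ ($R\sim x$) if $\Pr(R=C)=x_C/\|x\|$. Given $\varepsilon\in(0,0.1)$,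 $\mathcal{I}$ is $\varepsilon$-simple if $m>\exp(\exp(\varepsilon^{-30}))$ and $\varepsilon m\in\mathbb{N}$. Iterative randomized rounding: let $\varepsilon\in(0,0.1)$ with $\varepsilon^{-1/2}\in\mathbb{N}$ and $\mathcal{I}$ be $\varepsilon$-simple; let $q=\varepsilon m$ and $S_0=I$. For $j=1,\dots,\varepsilon^{-1}$: let $m_j=m(1-(j-1)\varepsilon)$; let $x^j$ be a $(1-\varepsilon)$-approximate solution of $\mathrm{LP}(S_{j-1},m_j)$ (a feasible solution of value at least $(1-\varepsilon)$ times its optimum), determined by the outcomes of the samples of previous iterations; sample independently $R^j_1,\dots,R^j_q\sim x^j$; set $S_j=S_{j-1}\setminus\bigcup_{b=1}^qR^j_b$. The output value is $V=v(I\setminus S_{\varepsilon^{-1}})$. Let $y^j=\mathrm{cover}(x^j)$. Let $\mathcal{F}_0$ be the trivial $\sigma$-algebra and $\mathcal{F}_j$ the $\sigma$-algebra generated by $\{R^{j'}_b: j'\le j,\ b\in[q]\}$. For $T\subseteq I$, $v(T)=\sum_{i\in T}v(i)$. *)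

theory Defs
  imports "HOL-Probability.Probability"
begin

definition configs :: "'a set \<Rightarrow> ('a \<Rightarrow> real) \<Rightarrow> nat \<Rightarrow> 'a set set" where
  "configs I w k = {C. C \<subseteq> I \<and> card C \<le> k \<and> (\<Sum>i\<in>C. w i) \<le> 1}"

definition cover :: "'a set \<Rightarrow> ('a \<Rightarrow> real) \<Rightarrow> nat \<Rightarrow> ('a set \<Rightarrow> real) \<Rightarrow> 'a \<Rightarrow> real" where
  "cover I w k x i = (\<Sum>C\<in>{C\<in>configs I w k. i \<in> C}. x C)"

definition frac_norm :: "'a set \<Rightarrow> ('a \<Rightarrow> real) \<Rightarrow> nat \<Rightarrow> ('a set \<Rightarrow> real) \<Rightarrow> real" where
  "frac_norm I w k x = (\<Sum>C\<in>configs I w k. x C)"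

definition frac_feasible :: "'a set \<Rightarrow> ('a \<Rightarrow> real) \<Rightarrow> nat \<Rightarrow> ('a set \<Rightarrow> real) \<Rightarrow> bool" where
  "frac_feasible I w k x \<longleftrightarrow>
     (\<forall>C. 0 \<le> x C) \<and> (\<forall>C. C \<notin> configs I w k \<longrightarrow> x C = 0) \<and>
     (\<forall>i\<in>I. cover I w k x i \<le> 1)"

definition frac_val :: "'a set \<Rightarrow> ('a \<Rightarrow> real) \<Rightarrow> ('a \<Rightarrow> real) \<Rightarrow> nat \<Rightarrow> ('a set \<Rightarrow> real) \<Rightarrow> real" where
  "frac_val I w v k x = (\<Sum>i\<in>I. cover I w k x i * v i)"

definition LP_feasible :: "'a set \<Rightarrow> ('a \<Rightarrow> real) \<Rightarrow> nat \<Rightarrow> 'a set \<Rightarrow> real \<Rightarrow> ('a set \<Rightarrow> real) \<Rightarrow> bool" where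
  "LP_feasible I w k S l x \<longleftrightarrow>
     frac_feasible I w k x \<and> (\<forall>C. \<not> C \<subseteq> S \<longrightarrow> x C = 0) \<and> frac_norm I w k x = l"

definition LP_opt :: "'a set \<Rightarrow> ('a \<Rightarrow> real) \<Rightarrow> ('a \<Rightarrow> real) \<Rightarrow> nat \<Rightarrow> 'a set \<Rightarrow> real \<Rightarrow> real" where
  "LP_opt I w v k S l = (SUP x\<in>{x. LP_feasible I w k S l x}. frac_val I w v k x)"

definition LP_approx :: "real \<Rightarrow> 'a set \<Rightarrow> ('a \<Rightarrow> real) \<Rightarrow> ('a \<Rightarrow> real) \<Rightarrow> nat \<Rightarrow> 'a set \<Rightarrow> real
    \<Rightarrow> ('a set \<Rightarrow> real) \<Rightarrow> bool" where
  "LP_approx eps I w v k S l x \<longleftrightarrow>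
     LP_feasible I w k S l x \<and> frac_val I w v k x \<ge> (1 - eps) * LP_opt I w v k S l"

definition sample_pmf :: "'a set \<Rightarrow> ('a \<Rightarrow> real) \<Rightarrow> nat \<Rightarrow> ('a set \<Rightarrow> real) \<Rightarrow> 'a set pmf" where
  "sample_pmf I w k x = embed_pmf (\<lambda>C. x C / frac_norm I w k x)"

text \<open>Remaining item set after a history of sampling rounds (each round a list of q
  sampled configurations): S = I minus the union of all sampled configurations.\<close>
definition remaining :: "'a set \<Rightarrow> 'a set list list \<Rightarrow> 'a set" where
  "remaining I h = I - (\<Union>r\<in>set h. \<Union>(set r))"

text \<open>The policy P j h gives the fractional solution x^j chosen in round j after history h
  (so x^j is determined by the outcomes of the previous samples); round j draws q
  independent samples from x^j.\<close>
primrec rr_hist :: "'a set \<Rightarrow> ('a \<Rightarrow> real) \<Rightarrow> nat \<Rightarrow> nat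
    \<Rightarrow> (nat \<Rightarrow> 'a set list list \<Rightarrow> 'a set \<Rightarrow> real) \<Rightarrow> nat \<Rightarrow> 'a set list list pmf" where
  "rr_hist I w k q P 0 = return_pmf []"
| "rr_hist I w k q P (Suc j) =
     bind_pmf (rr_hist I w k q P j)
       (\<lambda>h. map_pmf (\<lambda>r. h @ [r]) (replicate_pmf q (sample_pmf I w k (P (Suc j) h))))"

definition setval :: "('a \<Rightarrow> real) \<Rightarrow> 'a set \<Rightarrow> real" where
  "setval v T = (\<Sum>i\<in>T. v i)"

end

theory Submission
  imports Defs
begin


lemma rr_len: "H \<in> set_pmf (rr_hist I w k q P n) \<Longrightarrow> length H = n"
  by (induction n arbitrary: H) auto

lemma rr_prefix: "map_pmf (take j) (rr_hist I w k q P (j + d)) = rr_hist I w k q P j"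
proof (induction d)
  case 0
  have "map_pmf (take j) (rr_hist I w k q P j) = map_pmf id (rr_hist I w k q P j)"
    by (rule map_pmf_cong) (auto dest: rr_len)
  then show ?case by simp
next
  case (Suc d)
  have "map_pmf (take j) (rr_hist I w k q P (j + Suc d)) =
     bind_pmf (rr_hist I w k q P (j + d)) (\<lambda>h. return_pmf (take j h))"
    unfolding add_Suc_right rr_hist.simps map_bind_pmf pmf.map_comp
    by (rule bind_pmf_cong) (auto simp: o_def dest!: rr_len)
  also have "\<dots> = map_pmf (take j) (rr_hist I w k q P (j + d))" by (simp add: map_pmf_def)
  finally show ?case using Suc by simp
qed

lemma cond_bind:
  assumes h: "h \<in> set_pmf p" and G: "\<And>x y. x \<in> set_pmf p \<Longrightarrow> y \<in> set_pmf (K x) \<Longrightarrow> G y = x"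
  shows "cond_pmf (bind_pmf p K) {y. G y = h} = K h"
proof -
  let ?A = "{y. G y = h}"
  have ne: "set_pmf (bind_pmf p K) \<inter> ?A \<noteq> {}"
    using h G set_pmf_not_empty[of "K h"] by fastforce
  have em: "emeasure (measure_pmf (bind_pmf p K)) ?A = ennreal (pmf p h)"
  proof -
    have "emeasure (measure_pmf (bind_pmf p K)) ?A = (\<integral>\<^sup>+x. indicator {h} x \<partial>p)"
      unfolding emeasure_bind_pmf
    proof (rule nn_integral_cong_AE)
      show "AE x in measure_pmf p. emeasure (measure_pmf (K x)) ?A = indicator {h} x"
        unfolding AE_measure_pmf_iff
      proof (intro ballI)
        fix x assume x: "x \<in> set_pmf p"
        show "emeasure (measure_pmf (K x)) ?A = indicator {h} x"
        proof (cases "x = h")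
          case True
          have "emeasure (measure_pmf (K x)) ?A = emeasure (measure_pmf (K x)) UNIV"
            by (rule emeasure_eq_AE) (use G x True in \<open>auto simp: AE_measure_pmf_iff\<close>)
          then show ?thesis using True by (simp add: measure_pmf.emeasure_space_1)
        next
          case False
          have "emeasure (measure_pmf (K x)) ?A = emeasure (measure_pmf (K x)) {}"
            by (rule emeasure_eq_AE) (use G x False in \<open>auto simp: AE_measure_pmf_iff\<close>)
          then show ?thesis using False by simp
        qed
      qed
    qed
    also have "\<dots> = emeasure (measure_pmf p) {h}" by simp
    finally show ?thesis by (simp add: emeasure_pmf_single)
  qed
  then have me: "measure (measure_pmf (bind_pmf p K)) ?A = pmf p h"
    by (simp add: measure_def)
  have pos: "pmf p h > 0" using h by (simp add: pmf_positive)
  show ?thesis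
  proof (rule pmf_eqI)
    fix y
    show "pmf (cond_pmf (bind_pmf p K) ?A) y = pmf (K h) y"
    proof (cases "G y = h")
      case False
      have "y \<notin> set_pmf (K h)" using G[OF h] False by blast
      then show ?thesis using False by (simp add: pmf_cond[OF ne] set_pmf_iff)
    next
      case True
      have "emeasure (measure_pmf (bind_pmf p K)) {y} = (\<integral>\<^sup>+x. ennreal (pmf (K h) y) * indicator {h} x \<partial>p)"
        unfolding emeasure_bind_pmf
      proof (rule nn_integral_cong_AE)
        show "AE x in measure_pmf p. emeasure (measure_pmf (K x)) {y} = ennreal (pmf (K h) y) * indicator {h} x"
          unfolding AE_measure_pmf_iff
        proof (intro ballI)
          fix x assume x: "x \<in> set_pmf p"
          show "emeasure (measure_pmf (K x)) {y} = ennreal (pmf (K h) y) * indicator {h} x"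
          proof (cases "x = h")
            case True then show ?thesis by (simp add: emeasure_pmf_single)
          next
            case False
            then have "y \<notin> set_pmf (K x)" using G[OF x] \<open>G y = h\<close> by blast
            then show ?thesis using False by (simp add: emeasure_pmf_single set_pmf_iff)
          qed
        qed
      qed
      also have "\<dots> = ennreal (pmf (K h) y) * emeasure (measure_pmf p) {h}"
        by (simp add: nn_integral_cmult)
      finally have "pmf (bind_pmf p K) y = pmf (K h) y * pmf p h"
        by (simp add: emeasure_pmf_single ennreal_mult'[symmetric])
      then show ?thesis using True pos by (simp add: pmf_cond[OF ne] me)
    qed
  qed
qed



lemma rep_emeasure:
  "emeasure (measure_pmf (replicate_pmf n D)) {r. \<forall>C\<in>set r. C \<in> B}
     = ennreal ((measure (measure_pmf D) B) ^ n)"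
proof (induction n)
  case 0 then show ?case by (simp add: indicator_def)
next
  case (Suc n)
  have rs: "replicate_pmf (Suc n) D = bind_pmf D (\<lambda>x. map_pmf (Cons x) (replicate_pmf n D))"
    by (simp add: map_pmf_def)
  have "emeasure (measure_pmf (replicate_pmf (Suc n) D)) {r. \<forall>C\<in>set r. C \<in> B}
      = (\<integral>\<^sup>+x. ennreal ((measure (measure_pmf D) B) ^ n) * indicator B x \<partial>D)"
    unfolding rs emeasure_bind_pmf
  proof (rule nn_integral_cong)
    fix x
    show "emeasure (measure_pmf (map_pmf (Cons x) (replicate_pmf n D))) {r. \<forall>C\<in>set r. C \<in> B} =
         ennreal (measure (measure_pmf D) B ^ n) * indicator B x"
      using Suc by (cases "x \<in> B") (auto simp: vimage_def)
  qed
  also have "\<dots> = ennreal ((measure (measure_pmf D) B) ^ n) * emeasure (measure_pmf D) B"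
    by (simp add: nn_integral_cmult)
  also have "\<dots> = ennreal ((measure (measure_pmf D) B) ^ Suc n)"
    by (simp add: measure_pmf.emeasure_eq_measure ennreal_mult'[symmetric] mult.commute)
  finally show ?case .
qed

lemma rep_measure:
  "measure (measure_pmf (replicate_pmf n D)) {r. \<exists>C\<in>set r. C \<notin> B}
     = 1 - (measure (measure_pmf D) B) ^ n"
proof -
  have "measure (measure_pmf (replicate_pmf n D)) {r. \<forall>C\<in>set r. C \<in> B} = (measure (measure_pmf D) B) ^ n"
    using rep_emeasure[of n D B] by (simp add: measure_def)
  moreover have "{r. \<exists>C\<in>set r. C \<notin> B} = UNIV - {r. \<forall>C\<in>set r. C \<in> B}" by auto
  ultimately show ?thesis
    using measure_pmf.prob_compl[of "{r. \<forall>C\<in>set r. C \<in> B}" "replicate_pmf n D"] by simp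
qed

lemma configs_finite: "finite I \<Longrightarrow> finite (configs I w k)"
  unfolding configs_def by (rule finite_subset[of _ "Pow I"]) auto

lemma sample_props:
  assumes finI: "finite I" and feas: "frac_feasible I w k x" and l: "frac_norm I w k x > 0"
  shows "pmf (sample_pmf I w k x) C = x C / frac_norm I w k x"
    and "measure (measure_pmf (sample_pmf I w k x)) {C. i \<in> C} = cover I w k x i / frac_norm I w k x"
proof -
  let ?l = "frac_norm I w k x" and ?f = "\<lambda>C. x C / frac_norm I w k x"
  have nn: "\<And>C. 0 \<le> ?f C" using feas l unfolding frac_feasible_def by simp
  have out: "\<And>C. C \<notin> configs I w k \<Longrightarrow> x C = 0" using feas unfolding frac_feasible_def by simp
  have fin: "finite (configs I w k)" by (rule configs_finite[OF finI])
  have "(\<integral>\<^sup>+C. ennreal (?f C) \<partial>count_space UNIV) = (\<Sum>C\<in>configs I w k. ennreal (?f C))"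
    by (rule nn_integral_count_space') (use fin out in auto)
  also have "\<dots> = ennreal (\<Sum>C\<in>configs I w k. ?f C)" using nn by (simp add: sum_ennreal)
  also have "(\<Sum>C\<in>configs I w k. ?f C) = 1"
    using l by (simp add: sum_divide_distrib[symmetric] frac_norm_def)
  finally have int1: "(\<integral>\<^sup>+C. ennreal (?f C) \<partial>count_space UNIV) = 1" by simp
  show pm: "pmf (sample_pmf I w k x) C = ?f C" for C
    unfolding sample_pmf_def by (rule pmf_embed_pmf[OF nn int1])
  have sp: "set_pmf (sample_pmf I w k x) \<subseteq> configs I w k"
  proof
    fix C assume "C \<in> set_pmf (sample_pmf I w k x)"
    then have "x C \<noteq> 0" by (simp add: set_pmf_iff pm)
    then show "C \<in> configs I w k" using out by blast
  qed
  let ?D = "measure_pmf (sample_pmf I w k x)"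
  have "measure ?D {C. i \<in> C} = measure ?D ({C. i \<in> C} \<inter> set_pmf (sample_pmf I w k x))"
    by (simp add: measure_Int_set_pmf)
  also have "{C. i \<in> C} \<inter> set_pmf (sample_pmf I w k x) = {C\<in>configs I w k. i \<in> C} \<inter> set_pmf (sample_pmf I w k x)"
    using sp by auto
  also have "measure ?D \<dots> = measure ?D {C\<in>configs I w k. i \<in> C}"
    by (simp add: measure_Int_set_pmf)
  also have "\<dots> = (\<Sum>C\<in>{C\<in>configs I w k. i \<in> C}. ?f C)"
    using fin by (simp add: measure_measure_pmf_finite pm)
  also have "\<dots> = cover I w k x i / ?l"
    by (simp add: cover_def sum_divide_distrib[symmetric])
  finally show "measure ?D {C. i \<in> C} = cover I w k x i / ?l" .
qed

lemma expect_round: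
  assumes finS: "finite S"
  shows "measure_pmf.expectation (replicate_pmf n D) (\<lambda>r. setval v (S \<inter> \<Union>(set r)))
     = (\<Sum>i\<in>S. v i * (1 - (measure (measure_pmf D) {C. i \<notin> C}) ^ n))"
proof -
  have eq: "(\<lambda>r. setval v (S \<inter> \<Union>(set r))) = (\<lambda>r. \<Sum>i\<in>S. v i * indicator {r. \<exists>C\<in>set r. C \<notin> {C. i \<notin> C}} r)"
    by (rule ext) (simp add: setval_def indicator_def sum.inter_filter[OF finS] Int_def of_bool_def if_distrib cong: if_cong)
  show ?thesis
    unfolding eq
    by (subst Bochner_Integration.integral_sum) (auto simp: rep_measure[symmetric] measure_pmf.emeasure_eq_measure)
qed



lemma pow_quad: fixes p :: real assumes "0 \<le> p" "p \<le> 1"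
  shows "(1 - p) ^ n \<le> 1 - real n * p + (real n * p)^2 / 2"
proof (induction n)
  case 0 then show ?case by simp
next
  case (Suc n)
  have nn: "0 \<le> 1 - p" using assms by simp
  have "(1 - p) ^ Suc n = (1-p)^n * (1 - p)" by simp
  also have "\<dots> \<le> (1 - real n * p + (real n * p)^2 / 2) * (1 - p)"
    using Suc nn by (rule mult_right_mono)
  also have "\<dots> \<le> 1 - real (Suc n) * p + (real (Suc n) * p)^2 / 2"
    using assms by (simp add: algebra_simps power2_eq_square)
  finally show ?case .
qed

lemma item_bound:
  fixes vi cov eps c M :: real and n :: nat
  assumes vi: "0 \<le> vi" and cov: "0 \<le> cov" "cov \<le> 1" and eps: "0 < eps" "eps < 1"
    and c: "sqrt eps \<le> c" and M: "0 < M" and n: "real n = eps * M"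
  shows "vi * (1 - (1 - cov / (M * c)) ^ n) \<ge> cov * vi * (eps - eps powr (3/2)) * (1 / c)"
proof -
  have se: "0 < sqrt eps" using eps by simp
  have cpos: "0 < c" using c se by linarith
  have e32: "eps powr (3/2) = eps * sqrt eps"
  proof -
    have "eps powr (3/2) = eps powr (1 + 1/2)" by simp
    also have "\<dots> = eps powr 1 * eps powr (1/2)" by (rule powr_add)
    finally show ?thesis using eps by (simp add: powr_half_sqrt)
  qed
  define p where "p = cov / (M * c)"
  define t where "t = eps * cov / c"
  have t: "real n * p = t" unfolding p_def t_def n using M cpos by (simp add: field_simps)
  have t0: "0 \<le> t" unfolding t_def using eps cov cpos by simp
  have "eps / c \<le> eps / sqrt eps" using c se eps by (simp add: frac_le)
  also have "eps / sqrt eps = sqrt eps" using se by (metis real_div_sqrt eps(1) less_imp_le)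
  finally have ec: "eps / c \<le> sqrt eps" .
  have "t \<le> eps / c" unfolding t_def using cov eps cpos by (simp add: divide_right_mono mult_left_le)
  with ec have tle: "t \<le> sqrt eps" by simp
  have "sqrt eps < 1" using eps by simp
  have n1: "1 \<le> n" using n eps M by (metis of_nat_0 linorder_not_le less_one mult_pos_pos order_less_irrefl)
  have p0: "0 \<le> p" unfolding p_def using cov M cpos by simp
  have "p \<le> real n * p" using n1 p0 by (simp add: mult_le_cancel_right1)
  then have p1: "p \<le> 1" using t tle \<open>sqrt eps < 1\<close> by linarith
  have "(1 - p) ^ n \<le> 1 - t + t^2/2" using pow_quad[OF p0 p1, of n] t by simp
  then have "1 - (1-p)^n \<ge> t * (1 - t/2)" by (simp add: power2_eq_square algebra_simps)
  moreover have "t * (1 - t/2) \<ge> t * (1 - sqrt eps)"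
    using t0 tle se by (intro mult_left_mono) auto
  ultimately have key: "1 - (1-p)^n \<ge> t * (1 - sqrt eps)" by linarith
  have "cov * vi * (eps - eps powr (3/2)) * (1 / c) = vi * (t * (1 - sqrt eps))"
    unfolding e32 t_def using cpos by (simp add: field_simps)
  also have "\<dots> \<le> vi * (1 - (1-p)^n)" using key vi by (rule mult_left_mono)
  finally show ?thesis unfolding p_def .
qed


theorem lemma4p3:
  fixes I :: "'a set" and w v :: "'a \<Rightarrow> real" and m k :: nat and eps :: real
    and P :: "nat \<Rightarrow> 'a set list list \<Rightarrow> 'a set \<Rightarrow> real"
  assumes finI: "finite I"
    and w_range: "\<forall>i\<in>I. 0 \<le> w i \<and> w i \<le> 1"
    and v_nonneg: "\<forall>i\<in>I. 0 \<le> v i"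
    and m_pos: "0 < m" and k_pos: "0 < k"
    and eps_range: "0 < eps" "eps < 0.1"
    and eps_sqrt_nat: "eps powr (-1/2) \<in> \<nat>"
    and simple_m: "real m > exp (exp (eps powr (-30)))"
    and simple_nat: "eps * real m \<in> \<nat>"
    and policy: "\<forall>j\<in>{1..nat \<lfloor>1/eps\<rfloor>}.
        \<forall>h\<in>set_pmf (map_pmf (take (j - 1))
                (rr_hist I w k (nat \<lfloor>eps * real m\<rfloor>) P (nat \<lfloor>1/eps\<rfloor>))).
          LP_approx eps I w v k (remaining I h) (real m * (1 - (real j - 1) * eps)) (P j h)"
  shows "\<forall>j\<in>{1..nat \<lfloor>1/eps - eps powr (-1/2)\<rfloor>}.
     \<forall>h\<in>set_pmf (map_pmf (take (j - 1))
             (rr_hist I w k (nat \<lfloor>eps * real m\<rfloor>) P (nat \<lfloor>1/eps\<rfloor>))).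
       measure_pmf.expectation
           (cond_pmf (rr_hist I w k (nat \<lfloor>eps * real m\<rfloor>) P (nat \<lfloor>1/eps\<rfloor>))
                     {H. take (j - 1) H = h})
           (\<lambda>H. setval v (remaining I (take (j - 1) H) - remaining I (take j H)))
       \<ge> frac_val I w v k (P j h) * (eps - eps powr (3/2)) * (1 / (1 - (real j - 1) * eps))"
  proof (intro ballI)
  fix j h
  assume jr: "j \<in> {1..nat \<lfloor>1/eps - eps powr (-1/2)\<rfloor>}"
  define N where "N = nat \<lfloor>1/eps\<rfloor>"
  define q where "q = nat \<lfloor>eps * real m\<rfloor>"
  define mu where "mu = (\<lambda>n. rr_hist I w k q P n)"
  assume hin: "h \<in> set_pmf (map_pmf (take (j - 1)) (rr_hist I w k (nat \<lfloor>eps * real m\<rfloor>) P (nat \<lfloor>1/eps\<rfloor>)))"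
  have j1: "1 \<le> j" using jr by simp
  have jle: "real j \<le> 1/eps - eps powr (-1/2)" using jr by simp linarith
  have sp: "0 < eps powr (-1/2)" using eps_range by simp
  have "real j \<le> 1/eps" using jle sp by linarith
  then have jN: "j \<le> N" unfolding N_def by (rule le_nat_floor)
  have qr: "real q = eps * real m" using simple_nat unfolding q_def by (auto elim: Nats_cases)
  have pref: "\<And>a. a \<le> N \<Longrightarrow> map_pmf (take a) (mu N) = mu a"
    unfolding mu_def by (metis le_add_diff_inverse rr_prefix)
  have e: "map_pmf (take (j-1)) (rr_hist I w k (nat \<lfloor>eps * real m\<rfloor>) P (nat \<lfloor>1/eps\<rfloor>)) = mu (j-1)"
    using pref[of "j-1"] jN unfolding mu_def q_def N_def by simp
  have hin': "h \<in> set_pmf (mu (j - 1))"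
    using hin unfolding e .
  have hlen: "length h = j - 1" using hin' unfolding mu_def by (rule rr_len)
  have pol: "LP_approx eps I w v k (remaining I h) (real m * (1 - (real j - 1) * eps)) (P j h)"
    using policy jN j1 hin unfolding N_def by auto
  define c where "c = 1 - (real j - 1) * eps"
  have "eps powr (-1/2) * eps = eps powr (-1/2) * eps powr 1" using eps_range by simp
  also have "\<dots> = eps powr (-1/2 + 1)" by (rule powr_add[symmetric])
  finally have "eps powr (-1/2) * eps = eps powr (1/2)" by simp
  then have "eps powr (-1/2) * eps = sqrt eps" using eps_range by (simp add: powr_half_sqrt)
  moreover have "c \<ge> 1 - (1/eps - eps powr (-1/2) - 1) * eps"
    unfolding c_def using jle eps_range by (intro diff_left_mono mult_right_mono) auto
  moreover have "(1/eps - eps powr (-1/2) - 1) * eps = 1 - eps powr (-1/2) * eps - eps"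
    using eps_range by (simp add: field_simps)
  ultimately have csq: "c \<ge> sqrt eps" using eps_range by linarith
  have cpos: "c > 0" using csq eps_range by (smt (verit) real_sqrt_gt_zero)
  define x where "x = P j h"
  define S where "S = remaining I h"
  have feasx: "LP_feasible I w k S (real m * c) x" using pol unfolding x_def S_def c_def LP_approx_def by simp
  have ff: "frac_feasible I w k x" and sup: "\<And>C. \<not> C \<subseteq> S \<Longrightarrow> x C = 0"
    and nrm: "frac_norm I w k x = real m * c" using feasx unfolding LP_feasible_def by auto
  have nrmpos: "frac_norm I w k x > 0" using nrm cpos m_pos by simp
  define D where "D = sample_pmf I w k x"
  define K where "K = (\<lambda>h'. map_pmf (\<lambda>r. h' @ [r]) (replicate_pmf q (sample_pmf I w k (P j h'))))"
  have muj: "mu j = bind_pmf (mu (j-1)) K"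
  proof -
    from j1 obtain j' where jj: "j = Suc j'" by (cases j) auto
    show ?thesis unfolding mu_def K_def jj by simp
  qed
  define F where "F = (\<lambda>G. setval v (remaining I (take (j - 1) G) - remaining I G))"
  define A' where "A' = {G::'a set list list. take (j - 1) G = h}"
  have fH: "(\<lambda>H. setval v (remaining I (take (j - 1) H) - remaining I (take j H))) = (\<lambda>H. F (take j H))"
    unfolding F_def by (rule ext) (simp add: min_def)
  have Aeq: "{H. take (j - 1) H = h} = take j -` A'"
    unfolding A'_def by (auto simp: min_def)
  have ne: "set_pmf (mu N) \<inter> take j -` A' \<noteq> {}"
    using hin unfolding Aeq[symmetric] mu_def q_def N_def by auto
  have cj: "cond_pmf (mu j) A' = K h"
    unfolding muj A'_def
  proof (rule cond_bind[OF hin'])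
    fix x y assume "x \<in> set_pmf (mu (j-1))" "y \<in> set_pmf (K x)"
    then show "take (j - 1) y = x" unfolding K_def mu_def by (auto dest!: rr_len)
  qed
  have "measure_pmf.expectation (cond_pmf (mu N) {H. take (j - 1) H = h}) (\<lambda>H. F (take j H))
      = measure_pmf.expectation (map_pmf (take j) (cond_pmf (mu N) (take j -` A'))) F"
    unfolding Aeq by simp
  also have "\<dots> = measure_pmf.expectation (cond_pmf (mu j) A') F"
    using cond_map_pmf[OF ne] pref[OF jN] by simp
  also have "\<dots> = measure_pmf.expectation (replicate_pmf q D) (\<lambda>r. setval v (S \<inter> \<Union>(set r)))"
  proof -
    have "\<And>r. F (h @ [r]) = setval v (S \<inter> \<Union>(set r))"
      unfolding F_def S_def remaining_def using hlen by (intro arg_cong[where f="setval v"]) auto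
    then show ?thesis unfolding cj K_def D_def x_def by simp
  qed
  also have "\<dots> = (\<Sum>i\<in>S. v i * (1 - (measure (measure_pmf D) {C. i \<notin> C}) ^ q))"
    by (rule expect_round) (simp add: S_def remaining_def finI)
  finally have E: "measure_pmf.expectation (cond_pmf (mu N) {H. take (j - 1) H = h}) (\<lambda>H. F (take j H))
      = (\<Sum>i\<in>S. v i * (1 - (measure (measure_pmf D) {C. i \<notin> C}) ^ q))" .
  have SI: "S \<subseteq> I" unfolding S_def remaining_def by auto
  have cov0: "\<And>i. i \<in> I - S \<Longrightarrow> cover I w k x i = 0"
    unfolding cover_def by (rule sum.neutral) (auto intro!: sup)
  have fv: "frac_val I w v k x = (\<Sum>i\<in>S. cover I w k x i * v i)"
    unfolding frac_val_def using SI cov0 finI by (intro sum.mono_neutral_right) auto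
  have compl: "\<And>i. measure (measure_pmf D) {C. i \<notin> C} = 1 - cover I w k x i / (real m * c)"
  proof -
    fix i :: 'a
    have "{C. i \<notin> C} = UNIV - {C. i \<in> C}" by auto
    then show "measure (measure_pmf D) {C. i \<notin> C} = 1 - cover I w k x i / (real m * c)"
      using measure_pmf.prob_compl[of "{C. i \<in> C}" D] sample_props(2)[OF finI ff nrmpos, of i]
      unfolding D_def nrm by simp
  qed
  have covnn: "\<And>i. 0 \<le> cover I w k x i"
    using ff unfolding cover_def frac_feasible_def by (auto intro: sum_nonneg)
  have covle: "\<And>i. i \<in> I \<Longrightarrow> cover I w k x i \<le> 1"
    using ff unfolding frac_feasible_def by auto
  have "frac_val I w v k x * (eps - eps powr (3/2)) * (1 / c)
      = (\<Sum>i\<in>S. cover I w k x i * v i * (eps - eps powr (3/2)) * (1 / c))"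
    unfolding fv by (simp add: sum_distrib_right sum_divide_distrib)
  also have "\<dots> \<le> (\<Sum>i\<in>S. v i * (1 - (measure (measure_pmf D) {C. i \<notin> C}) ^ q))"
  proof (rule sum_mono)
    fix i assume iS: "i \<in> S"
    then have iI: "i \<in> I" using SI by auto
    show "cover I w k x i * v i * (eps - eps powr (3/2)) * (1 / c)
        \<le> v i * (1 - (measure (measure_pmf D) {C. i \<notin> C}) ^ q)"
      unfolding compl
      by (rule item_bound) (use v_nonneg iI covnn covle eps_range csq m_pos qr in auto)
  qed
  finally show "measure_pmf.expectation
           (cond_pmf (rr_hist I w k (nat \<lfloor>eps * real m\<rfloor>) P (nat \<lfloor>1/eps\<rfloor>))
                     {H. take (j - 1) H = h})
           (\<lambda>H. setval v (remaining I (take (j - 1) H) - remaining I (take j H)))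
       \<ge> frac_val I w v k (P j h) * (eps - eps powr (3/2)) * (1 / (1 - (real j - 1) * eps))"
    using E unfolding fH mu_def q_def N_def x_def c_def by simp
qed

end
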